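(* Let $X$ be an infinite Tychonoff space and let $E$ be a Banach space. If $T:C_p(X)\to E_w$ is a sequentially continuous linear operator, then for every sequence $\{U_n: n\in \omega\}$ of pairwise disjoint nonempty open subsets of $X$ there exists $N$ such that $T(f)=0$ for all $n\geqslant N$ and all $f\in C(X)$ with $\operatorname{supp}(f)\subset U_n$.
   Context: $C_p(X)$ is the space $C(X)$ of continuous real-valued functions on $X$ with the pointwise convergence topology; $E_w$ is $E$ with its weak topology. For $f:X\to\mathbb{R}$, $\operatorname{supp}(f)=\{t\in X: f(t)\neq 0\}$. A map is sequentially continuous if it sends convergent sequences to convergent sequences. *)

theory Defs
  imports "HOL-Analysis.Analysis"
begin

definition supp :: "('a \<Rightarrow> real) \<Rightarrow> 'a set" where
  "supp f = {t. f t \<noteq> 0}"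

definition tychonoff_type :: "'a::topological_space itself \<Rightarrow> bool" where
  "tychonoff_type _ \<longleftrightarrow> completely_regular_space (euclidean :: 'a topology)
                      \<and> t1_space (euclidean :: 'a topology)"

text \<open>Sequential continuity of T : C_p(X) \<rightarrow> E_w: pointwise convergence of continuous
  functions is sent to weak convergence in E.\<close>
definition seq_cont_Cp_weak :: "(('a::topological_space \<Rightarrow> real) \<Rightarrow> 'e::real_normed_vector) \<Rightarrow> bool" where
  "seq_cont_Cp_weak T \<longleftrightarrow>
     (\<forall>fs f. (\<forall>n. continuous_on UNIV (fs n)) \<and> continuous_on UNIV f \<and>
             (\<forall>x. (\<lambda>n. fs n x) \<longlonglongrightarrow> f x) \<longrightarrow>
             (\<forall>\<phi>::'e \<Rightarrow> real. bounded_linear \<phi> \<longrightarrow> (\<lambda>n. \<phi> (T (fs n))) \<longlonglongrightarrow> \<phi> (T f)))"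

definition linear_on_C :: "(('a::topological_space \<Rightarrow> real) \<Rightarrow> 'e::real_vector) \<Rightarrow> bool" where
  "linear_on_C T \<longleftrightarrow>
     (\<forall>f g. continuous_on UNIV f \<and> continuous_on UNIV g \<longrightarrow> T (\<lambda>x. f x + g x) = T f + T g) \<and>
     (\<forall>c f. continuous_on UNIV f \<longrightarrow> T (\<lambda>x. c * f x) = c *\<^sub>R T f)"

end

theory Submission
  imports Defs
begin
definition hbg :: "('a::real_normed_vector \<times> real) set set" where
  "hbg = {G. (0,0) \<in> G \<and> (\<forall>x a y b. (x,a)\<in>G \<longrightarrow> (y,b)\<in>G \<longrightarrow> (x+y,a+b)\<in>G)
     \<and> (\<forall>c x a. (x,a)\<in>G \<longrightarrow> (c *\<^sub>R x, c*a)\<in>G)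
     \<and> (\<forall>x a b. (x,a)\<in>G \<longrightarrow> (x,b)\<in>G \<longrightarrow> a = b)
     \<and> (\<forall>x a. (x,a)\<in>G \<longrightarrow> a \<le> norm x)}"

lemma hb_ext:
  fixes G :: "('a::real_normed_vector \<times> real) set"
  assumes G: "G \<in> hbg" and y: "y \<notin> fst ` G"
  shows "\<exists>G'\<in>hbg. G \<subseteq> G' \<and> G' \<noteq> G"
proof -
  have z: "(0,0) \<in> G" and ad: "\<And>x a y b. (x,a)\<in>G \<Longrightarrow> (y,b)\<in>G \<Longrightarrow> (x+y,a+b)\<in>G"
    and sc: "\<And>c x a. (x,a)\<in>G \<Longrightarrow> (c *\<^sub>R x, c*a)\<in>G"
    and fu: "\<And>x a b. (x,a)\<in>G \<Longrightarrow> (x,b)\<in>G \<Longrightarrow> a = b"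
    and dm: "\<And>x a. (x,a)\<in>G \<Longrightarrow> a \<le> norm x"
    using G unfolding hbg_def by blast+
  define S where "S = {a - norm (x - y) | x a. (x,a) \<in> G}"
  define c where "c = Sup S"
  have key: "a - norm (x - y) \<le> norm (x' + y) - a'" if "(x,a)\<in>G" "(x',a')\<in>G" for x a x' a'
  proof -
    have "a + a' \<le> norm (x + x')" using dm[OF ad[OF that]] .
    also have "\<dots> \<le> norm (x - y) + norm (x' + y)"
      using norm_triangle_ineq[of "x - y" "x' + y"] by simp
    finally show ?thesis by simp
  qed
  have Sne: "S \<noteq> {}" using z unfolding S_def by blast
  have Sbd: "bdd_above S" unfolding S_def bdd_above_def
    using key[OF _ z] by fastforce
  have c1: "a - norm (x - y) \<le> c" if "(x,a)\<in>G" for x a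
    unfolding c_def using that Sbd by (auto intro!: cSup_upper simp: S_def)
  have c2: "c \<le> norm (x' + y) - a'" if "(x',a')\<in>G" for x' a'
    unfolding c_def using that Sne by (auto intro!: cSup_least simp: S_def key)
  define G' where "G' = {(x + t *\<^sub>R y, a + t*c) | x a t. (x,a)\<in>G}"
  have G'I: "(u + t *\<^sub>R y, p + t*c) \<in> G'" if "(u,p)\<in>G" for u p t
    unfolding G'_def using that by blast
  have GG': "G \<subseteq> G'" unfolding G'_def by force
  have yG': "(y, c) \<in> G'" unfolding G'_def using z by force
  have "G' \<in> hbg"
    unfolding hbg_def mem_Collect_eq
  proof (intro conjI allI impI)
    show "(0,0) \<in> G'" using GG' z by blast
  next
    fix x a x' b assume "(x,a)\<in>G'" "(x',b)\<in>G'"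
    then obtain u p t u' p' t' where "(u,p)\<in>G" "(u',p')\<in>G" "x = u + t *\<^sub>R y" "a = p + t*c"
      "x' = u' + t' *\<^sub>R y" "b = p' + t'*c" unfolding G'_def by blast
    then show "(x+x', a+b)\<in>G'"
    proof -
      have "(u+u', p+p') \<in> G" using ad \<open>(u,p)\<in>G\<close> \<open>(u',p')\<in>G\<close> by blast
      from G'I[OF this, of "t+t'"] show ?thesis using \<open>x = u + t *\<^sub>R y\<close> \<open>a = p + t*c\<close>
        \<open>x' = u' + t' *\<^sub>R y\<close> \<open>b = p' + t'*c\<close>
        by (simp add: algebra_simps)
    qed
  next
    fix k x a assume "(x,a)\<in>G'"
    then obtain u p t where "(u,p)\<in>G" "x = u + t *\<^sub>R y" "a = p + t*c" unfolding G'_def by blast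
    then show "(k *\<^sub>R x, k*a)\<in>G'"
    proof -
      have "(k *\<^sub>R u, k*p) \<in> G" using sc \<open>(u,p)\<in>G\<close> by blast
      from G'I[OF this, of "k*t"] show ?thesis using \<open>x = u + t *\<^sub>R y\<close> \<open>a = p + t*c\<close>
        by (simp add: algebra_simps)
    qed
  next
    fix x a b assume "(x,a)\<in>G'" "(x,b)\<in>G'"
    then obtain u p t u' p' t' where h: "(u,p)\<in>G" "(u',p')\<in>G" "x = u + t *\<^sub>R y" "a = p + t*c"
      "x = u' + t' *\<^sub>R y" "b = p' + t'*c" unfolding G'_def by blast
    have tt: "t = t'"
    proof (rule ccontr)
      assume "t \<noteq> t'"
      have m: "(u + (-1) *\<^sub>R u', p + (-1)*p') \<in> G" using ad[OF h(1) sc[OF h(2)]] .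
      have "(1/(t'-t)) *\<^sub>R (u + (-1) *\<^sub>R u') = y"
      proof -
        have "u - u' = (t' - t) *\<^sub>R y" using h(3,5) by (simp add: algebra_simps)
        then show ?thesis using \<open>t \<noteq> t'\<close> by simp
      qed
      then have "y \<in> fst ` G" using sc[OF m, of "1/(t'-t)"] by force
      then show False using y by blast
    qed
    then have "u = u'" using h by simp
    then have "p = p'" using fu h by blast
    then show "a = b" using h tt by simp
  next
    fix x a assume "(x,a)\<in>G'"
    then obtain u p t where h: "(u,p)\<in>G" "x = u + t *\<^sub>R y" "a = p + t*c" unfolding G'_def by blast
    consider "t = 0" | "t > 0" | "t < 0" by linarith
    then show "a \<le> norm x"
    proof cases
      case 1 then show ?thesis using h dm by simp
    next
      case 2
      have "c \<le> norm ((1/t) *\<^sub>R u + y) - (1/t)*p" using c2[OF sc[OF h(1)]] .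
      then have "t * c \<le> t * norm ((1/t) *\<^sub>R u + y) - p" using 2
        by (simp add: field_simps)
      also have "t * norm ((1/t) *\<^sub>R u + y) = norm (t *\<^sub>R ((1/t) *\<^sub>R u + y))"
        using 2 by simp
      also have "t *\<^sub>R ((1/t) *\<^sub>R u + y) = x" using 2 h by (simp add: algebra_simps)
      finally show ?thesis using h by simp
    next
      case 3
      define s where "s = -t"
      have s: "s > 0" using 3 s_def by simp
      have "(1/s)*p - norm ((1/s) *\<^sub>R u - y) \<le> c" using c1[OF sc[OF h(1)]] .
      then have "p - s * norm ((1/s) *\<^sub>R u - y) \<le> s * c" using s
        by (simp add: field_simps)
      also have "s * norm ((1/s) *\<^sub>R u - y) = norm (s *\<^sub>R ((1/s) *\<^sub>R u - y))"
        using s by simp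
      also have "s *\<^sub>R ((1/s) *\<^sub>R u - y) = x" using s h s_def by (simp add: algebra_simps)
      finally show ?thesis using h s_def by simp
    qed
  qed
  moreover have "G' \<noteq> G" using yG' y by force
  ultimately show ?thesis using GG' by blast
qed

lemma hahn_banach_nonzero:
  fixes e :: "'a::real_normed_vector"
  assumes "e \<noteq> 0"
  shows "\<exists>\<phi>::'a \<Rightarrow> real. bounded_linear \<phi> \<and> \<phi> e \<noteq> 0"
proof -
  define G0 where "G0 = {(t *\<^sub>R e, t * norm e) | t. True}"
  define A where "A = {G \<in> hbg. G0 \<subseteq> G}"
  have G0m: "(x,a) \<in> G0 \<longleftrightarrow> (\<exists>t. x = t *\<^sub>R e \<and> a = t * norm e)" for x a
    unfolding G0_def by blast
  have "G0 \<in> hbg" unfolding hbg_def mem_Collect_eq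
  proof (intro conjI allI impI)
    show "(0, 0) \<in> G0" unfolding G0m by (auto intro!: exI[of _ 0])
  next
    fix x a y b assume "(x, a) \<in> G0" "(y, b) \<in> G0"
    then obtain t s where "x = t *\<^sub>R e" "a = t * norm e" "y = s *\<^sub>R e" "b = s * norm e"
      unfolding G0m by blast
    then show "(x + y, a + b) \<in> G0" unfolding G0m
      by (auto simp: scaleR_add_left distrib_right intro!: exI[of _ "t+s"])
  next
    fix c x a assume "(x, a) \<in> G0"
    then obtain t where "x = t *\<^sub>R e" "a = t * norm e" unfolding G0m by blast
    then show "(c *\<^sub>R x, c * a) \<in> G0" unfolding G0m
      by (auto intro!: exI[of _ "c * t"])
  next
    fix x a b assume "(x, a) \<in> G0" "(x, b) \<in> G0"
    then show "a = b" using assms unfolding G0m by auto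
  next
    fix x a assume "(x, a) \<in> G0"
    then show "a \<le> norm x" unfolding G0m by (auto intro!: mult_right_mono)
  qed
  then have "A \<noteq> {}" unfolding A_def by blast
  have "\<exists>M\<in>A. \<forall>X\<in>A. M \<subseteq> X \<longrightarrow> X = M"
  proof (rule subset_Zorn_nonempty[OF \<open>A \<noteq> {}\<close>])
    fix C assume Cne: "C \<noteq> {}" and ch: "subset.chain A C"
    have CA: "C \<subseteq> A" and cmp: "\<And>X Y. X\<in>C \<Longrightarrow> Y\<in>C \<Longrightarrow> X \<subseteq> Y \<or> Y \<subseteq> X"
      using ch unfolding subset.chain_def by blast+
    have two: "\<exists>Z\<in>C. p \<in> Z \<and> q \<in> Z" if "p \<in> \<Union>C" "q \<in> \<Union>C" for p q
      using that cmp by blast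
    show "\<Union>C \<in> A" unfolding A_def hbg_def mem_Collect_eq
    proof (intro conjI allI impI)
      show "(0,0) \<in> \<Union>C" using Cne CA unfolding A_def hbg_def by blast
    next
      fix x a y b assume "(x,a) \<in> \<Union>C" "(y,b) \<in> \<Union>C"
      then obtain Z where "Z\<in>C" "(x,a)\<in>Z" "(y,b)\<in>Z" using two by blast
      then show "(x+y,a+b) \<in> \<Union>C" using CA unfolding A_def hbg_def by blast
    next
      fix c x a assume "(x,a) \<in> \<Union>C"
      then obtain Z where "Z\<in>C" "(x,a)\<in>Z" by blast
      then show "(c *\<^sub>R x, c*a) \<in> \<Union>C" using CA unfolding A_def hbg_def by blast
    next
      fix x a b assume "(x,a) \<in> \<Union>C" "(x,b) \<in> \<Union>C"
      then obtain Z where "Z\<in>C" "(x,a)\<in>Z" "(x,b)\<in>Z" using two by blast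
      then show "a = b" using CA unfolding A_def hbg_def by blast
    next
      fix x a assume "(x,a) \<in> \<Union>C"
      then obtain Z where "Z\<in>C" "(x,a)\<in>Z" by blast
      then show "a \<le> norm x" using CA unfolding A_def hbg_def by blast
    next
      show "G0 \<subseteq> \<Union>C" using Cne CA unfolding A_def by blast
    qed
  qed
  then obtain M where M: "M \<in> A" and Mmax: "\<forall>X\<in>A. M \<subseteq> X \<longrightarrow> X = M" by blast
  have Mh: "M \<in> hbg" and G0M: "G0 \<subseteq> M" using M unfolding A_def by auto
  have ad: "\<And>x a y b. (x,a)\<in>M \<Longrightarrow> (y,b)\<in>M \<Longrightarrow> (x+y,a+b)\<in>M"
    and sc: "\<And>c x a. (x,a)\<in>M \<Longrightarrow> (c *\<^sub>R x, c*a)\<in>M"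
    and fu: "\<And>x a b. (x,a)\<in>M \<Longrightarrow> (x,b)\<in>M \<Longrightarrow> a = b"
    and dm: "\<And>x a. (x,a)\<in>M \<Longrightarrow> a \<le> norm x"
    using Mh unfolding hbg_def by blast+
  have full: "\<exists>a. (x,a) \<in> M" for x
  proof (rule ccontr)
    assume "\<nexists>a. (x, a) \<in> M"
    then have "x \<notin> fst ` M" by force
    from hb_ext[OF Mh this] obtain G' where "G' \<in> hbg" "M \<subseteq> G'" "G' \<noteq> M" by blast
    then show False using Mmax G0M unfolding A_def by blast
  qed
  define \<phi> where "\<phi> x = (THE a. (x,a) \<in> M)" for x
  have phi: "(x, \<phi> x) \<in> M" for x
    unfolding \<phi>_def using full[of x] fu by (metis theI)
  have phieq: "(x,a) \<in> M \<Longrightarrow> \<phi> x = a" for x a using phi fu by blast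
  have "bounded_linear \<phi>"
  proof (rule bounded_linear_intro[where K=1])
    show "\<phi> (x + y) = \<phi> x + \<phi> y" for x y using phieq[OF ad[OF phi phi]] .
    show "\<phi> (r *\<^sub>R x) = r *\<^sub>R \<phi> x" for r x using phieq[OF sc[OF phi]] by simp
    show "norm (\<phi> x) \<le> norm x * 1" for x
    proof -
      have "\<phi> x \<le> norm x" using dm[OF phi] .
      moreover have "- \<phi> x \<le> norm x"
        using dm[OF sc[OF phi[of x], of "-1"]] by simp
      ultimately show ?thesis by simp
    qed
  qed
  moreover have "\<phi> e = norm e"
    using G0M phieq G0m[of e "norm e"] by (metis mult_1 scale_one subsetD)
  ultimately show ?thesis using assms by (metis norm_eq_zero)
qed

lemma functional_nonvanishing:
  fixes e :: "nat \<Rightarrow> 'e::banach"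
  assumes "\<And>k. e k \<noteq> 0"
  shows "\<exists>\<phi>::'e \<Rightarrow> real. bounded_linear \<phi> \<and> (\<forall>k. \<phi> (e k) \<noteq> 0)"
proof -
  define Z where "Z k = {\<psi>::'e \<Rightarrow>\<^sub>L real. blinfun_apply \<psi> (e k) = 0}" for k
  have cl: "closed (Z k)" for k
    unfolding Z_def by (intro closed_Collect_eq continuous_intros)
  have int: "interior (Z k) = {}" for k
  proof (rule ccontr)
    assume "interior (Z k) \<noteq> {}"
    then obtain x where "x \<in> interior (Z k)" by blast
    then obtain r where r: "r > 0" "ball x r \<subseteq> Z k" using mem_interior by blast
    obtain \<psi>0 :: "'e \<Rightarrow> real" where \<psi>0: "bounded_linear \<psi>0" "\<psi>0 (e k) \<noteq> 0"
      using hahn_banach_nonzero[OF assms[of k]] by blast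
    define \<psi> where "\<psi> = Blinfun \<psi>0"
    have \<psi>a: "blinfun_apply \<psi> = \<psi>0" unfolding \<psi>_def using \<psi>0(1) by (simp add: bounded_linear_Blinfun_apply)
    define d where "d = r / (2 * (norm \<psi> + 1))"
    have np: "2 * (norm \<psi> + 1) > 0" by (smt (verit) norm_ge_zero)
    have d: "d > 0" unfolding d_def by (rule divide_pos_pos[OF r(1) np])
    have "norm (d *\<^sub>R \<psi>) < r"
    proof -
      have "norm (d *\<^sub>R \<psi>) = d * norm \<psi>" using d by simp
      also have "\<dots> \<le> d * (norm \<psi> + 1)" using d by simp
      also have "d * (norm \<psi> + 1) = r / 2" unfolding d_def using np by (simp add: field_simps)
      also have "\<dots> < r" using r by simp
      finally show ?thesis .
    qed
    then have "x + d *\<^sub>R \<psi> \<in> ball x r" by (simp add: dist_norm)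
    then have a: "x + d *\<^sub>R \<psi> \<in> Z k" using r by blast
    have b: "x \<in> Z k" using r by auto
    from a b have "d * \<psi>0 (e k) = 0" unfolding Z_def
      by (simp add: blinfun.add_left blinfun.scaleR_left \<psi>a)
    then show False using d \<psi>0 by simp
  qed
  have "Met_TC.mtopology interior_of \<Union>(range Z) = {}"
  proof (rule Met_TC.metric_Baire_category_alt)
    show "Met_TC.mcomplete TYPE('e \<Rightarrow>\<^sub>L real)" by (simp add: complete_UNIV)
    show "countable (range Z)" by simp
    fix T assume "T \<in> range Z"
    then show "closedin Met_TC.mtopology T \<and> Met_TC.mtopology interior_of T = {}"
      using cl int by auto
  qed
  then have "\<Union>(range Z) \<noteq> UNIV" by (metis interior_UNIV euclidean_interior_of mtopology_is_euclidean empty_not_UNIV)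
  then obtain \<psi> where "\<psi> \<notin> \<Union>(range Z)" by blast
  then have "\<forall>k. blinfun_apply \<psi> (e k) \<noteq> 0" unfolding Z_def by auto
  then show ?thesis using blinfun.bounded_linear_right by blast
qed

theorem lemma2p1:
  fixes T :: "('a::topological_space \<Rightarrow> real) \<Rightarrow> 'e::banach"
  assumes "tychonoff_type TYPE('a)"
    and "infinite (UNIV :: 'a set)"
    and "linear_on_C T"
    and "seq_cont_Cp_weak T"
    and "\<forall>n. open (U n) \<and> U n \<noteq> {}"
    and "\<forall>m n. m \<noteq> n \<longrightarrow> U m \<inter> U n = {}"
  shows "\<exists>N::nat. \<forall>n\<ge>N. \<forall>f. continuous_on UNIV f \<and> supp f \<subseteq> U n \<longrightarrow> T f = 0"
proof (rule ccontr)
  assume "\<not> ?thesis"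
  then have "\<forall>N. \<exists>n f. n \<ge> N \<and> continuous_on UNIV f \<and> supp f \<subseteq> U n \<and> T f \<noteq> 0" by blast
  then obtain nn ff where nf: "\<And>N. nn N \<ge> N \<and> continuous_on UNIV (ff N) \<and> supp (ff N) \<subseteq> U (nn N) \<and> T (ff N) \<noteq> 0"
    by metis
  have lin1: "\<And>f g. continuous_on UNIV f \<Longrightarrow> continuous_on UNIV g \<Longrightarrow> T (\<lambda>x. f x + g x) = T f + T g"
    and lin2: "\<And>c f. continuous_on UNIV f \<Longrightarrow> T (\<lambda>x. c * f x) = c *\<^sub>R T f"
    using assms(3) unfolding linear_on_C_def by blast+
  define m where "m k = rec_nat 0 (\<lambda>_ j. Suc (nn j)) k" for k
  have mS: "m (Suc k) = Suc (nn (m k))" for k unfolding m_def by simp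
  define s where "s k = nn (m k)" for k
  have "s k < s (Suc k)" for k unfolding s_def mS using nf[of "Suc (nn (m k))"] by simp
  then have smono: "strict_mono s" by (rule strict_monoI_Suc)
  define g where "g k = ff (m k)" for k
  have gc: "continuous_on UNIV (g k)" and gs: "supp (g k) \<subseteq> U (s k)" and gT: "T (g k) \<noteq> 0" for k
    unfolding g_def s_def using nf by blast+
  obtain \<phi> :: "'e \<Rightarrow> real" where \<phi>: "bounded_linear \<phi>" "\<And>k. \<phi> (T (g k)) \<noteq> 0"
    using functional_nonvanishing[of "\<lambda>k. T (g k)"] gT by blast
  define h where "h k = (\<lambda>x. (1 / \<phi> (T (g k))) * g k x)" for k
  have hc: "continuous_on UNIV (h k)" for k unfolding h_def by (intro continuous_intros gc)
  have zero: "g k x = 0" if "g j x \<noteq> 0" "k \<noteq> j" for j k x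
  proof (rule ccontr)
    assume "g k x \<noteq> 0"
    then have "x \<in> U (s k)" "x \<in> U (s j)" using gs that unfolding supp_def by blast+
    moreover have "s k \<noteq> s j" using smono that(2) by (metis strict_mono_eq)
    ultimately show False using assms(6) by blast
  qed
  have hlim: "(\<lambda>k. h k x) \<longlonglongrightarrow> 0" for x
  proof (cases "\<exists>j. g j x \<noteq> 0")
    case True
    then obtain j where "g j x \<noteq> 0" by blast
    then have "\<forall>k\<ge>Suc j. h k x = 0" unfolding h_def using zero by fastforce
    then show ?thesis by (intro tendsto_eventually) (auto simp: eventually_sequentially)
  next
    case False
    then show ?thesis unfolding h_def by simp
  qed
  have c0: "continuous_on UNIV (\<lambda>x::'a. 0::real)" by simp
  have "(\<lambda>k. \<phi> (T (h k))) \<longlonglongrightarrow> \<phi> (T (\<lambda>x. 0))"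
    using assms(4) hc c0 hlim \<phi>(1) unfolding seq_cont_Cp_weak_def by blast
  moreover have "T (h k) = (1 / \<phi> (T (g k))) *\<^sub>R T (g k)" for k
    unfolding h_def using lin2[OF gc] by blast
  have "\<phi> (T (h k)) = 1" for k
  proof -
    have "\<phi> (T (h k)) = (1 / \<phi> (T (g k))) * \<phi> (T (g k))"
      unfolding \<open>T (h k) = (1 / \<phi> (T (g k))) *\<^sub>R T (g k)\<close>
      using linear_scale[OF bounded_linear.linear[OF \<phi>(1)]] by (metis real_scaleR_def)
    then show ?thesis using \<phi>(2)[of k] by simp
  qed
  moreover have "T (\<lambda>x. 0) = 0" using lin2[OF c0, of 0] by simp
  ultimately have "(\<lambda>k. 1::real) \<longlonglongrightarrow> \<phi> 0" by simp
  then have "1 = \<phi> 0" by (simp add: LIMSEQ_const_iff)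
  then show False using linear_0[OF bounded_linear.linear[OF \<phi>(1)]] by simp
qed

end
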